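(* Let $A\in\mathbb{R}^{m\times m}$ be positive definite, $B\in\mathbb{R}^{m\times n}$ ($n\le m$), $\alpha\ge0$, $\beta>0$, and let $(\lambda,(u^*,v^* )^* )$ be an eigenpair of $\mathcal{P}_{MGSSP}^{-1}\mathcal{A}$ with $u\in\mathbb{C}^m$, $v\in\mathbb{C}^n$ and $B^Tu\neq0$. Set $a_1+ib_1=\frac{u^*Au}{u^*u}$ ($a_1,b_1\in\mathbb{R}$), $c_1=\frac{u^*BB^Tu}{u^*u}$, $a_2=\beta^2(a_1^2-b_1^2)-4\alpha\beta c_1$, $b_2=2\beta^2a_1b_1$, and $$z_1=\sqrt{\tfrac{\sqrt{a_2^2+b_2^2}+a_2}{2}},\qquad z_2=\operatorname{sign}(b_1)\sqrt{\tfrac{\sqrt{a_2^2+b_2^2}-a_2}{2}},$$ so that $(z_1+iz_2)^2=a_2+ib_2$. Let $D=\alpha\beta+2\beta a_1+4c_1+2i\beta b_1$. Then $\lambda$ is one of $$\lambda_+=\frac12+\frac{(z_1-\alpha\beta-\beta a_1)+i(z_2-\beta b_1)}{2D},\qquad \lambda_-=\frac12-\frac{(z_1+\alpha\beta+\beta a_1)+i(z_2+\beta b_1)}{2D},$$ and $$\Big|\lambda_\pm-\frac12\Big|^2\le\frac{(\alpha\beta+2\beta a_1)^2+\big(\beta|b_1|+\sqrt{\beta^2b_1^2+4\alpha\beta c_1}\big)^2}{4\big[(\alpha\beta+2\beta a_1+4c_1)^2+4\beta^2b_1^2\big]}\le\frac{(\alpha\beta+2\beta\rho(H))^2+\big(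\beta\rho(S)+\sqrt{\beta^2\rho(S)^2+4\alpha\beta\rho(BB^T)}\big)^2}{4\big(\alpha\beta+2\beta\lambda_{\min}(H)+4\lambda_{\min}(BB^T)\big)^2}.$$
   Context: A real square matrix $A$ is called positive definite if $x^TAx>0$ for all nonzero $x\in\mathbb{R}^m$ ($A$ need not be symmetric). $H=\frac12(A+A^T)$, $S=\frac12(A-A^T)$. $\mathcal{A}=\begin{pmatrix}A & B\\ -B^T & 0\end{pmatrix}$ and, for $\alpha\ge0,\beta>0$, $\mathcal{P}_{MGSSP}=\begin{pmatrix}\alpha I+2A & 2B\\ -2B^T & \beta I\end{pmatrix}$. $\lambda_{\min}(\cdot)$ is the smallest eigenvalue of a symmetric matrix, $\rho(\cdot)$ the spectral radius, $\operatorname{sign}(b_1)$ the sign of $b_1$ (with $\operatorname{sign}(0)$ taken as $\pm1$ arbitrarily; both choices give $z_2=0$ unless $b_1\neq0$). *)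

theory Defs
  imports "HOL-Analysis.Analysis"
begin

definition pos_def :: "real^'m^'m \<Rightarrow> bool" where
  "pos_def A \<longleftrightarrow> (\<forall>x::real^'m. x \<noteq> 0 \<longrightarrow> x \<bullet> (A *v x) > 0)"

definition cmat :: "real^'n^'m \<Rightarrow> complex^'n^'m" where
  "cmat M = (\<chi> i j. complex_of_real (M $ i $ j))"

definition spec_radius :: "real^'m^'m \<Rightarrow> real" where
  "spec_radius M = Max {cmod l | l. \<exists>x::complex^'m. x \<noteq> 0 \<and> cmat M *v x = l *s x}"

text \<open>Smallest (real) eigenvalue, meant for symmetric matrices.\<close>
definition lambda_min :: "real^'m^'m \<Rightarrow> real" where
  "lambda_min M = Min {l. \<exists>x::real^'m. x \<noteq> 0 \<and> M *v x = l *s x}"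

definition saddle_mat :: "real^'m^'m \<Rightarrow> real^'n^'m \<Rightarrow> real^('m+'n)^('m+'n)" where
  "saddle_mat A B = (\<chi> i j. case i of
       Inl p \<Rightarrow> (case j of Inl q \<Rightarrow> A $ p $ q | Inr q \<Rightarrow> B $ p $ q)
     | Inr p \<Rightarrow> (case j of Inl q \<Rightarrow> - (B $ q $ p) | Inr q \<Rightarrow> 0))"

definition P_MGSSP :: "real \<Rightarrow> real \<Rightarrow> real^'m^'m \<Rightarrow> real^'n^'m \<Rightarrow> real^('m+'n)^('m+'n)" where
  "P_MGSSP \<alpha> \<beta> A B = (\<chi> i j. case i of
       Inl p \<Rightarrow> (case j of Inl q \<Rightarrow> \<alpha> * (if p = q then 1 else 0) + 2 * A $ p $ q
                          | Inr q \<Rightarrow> 2 * B $ p $ q)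
     | Inr p \<Rightarrow> (case j of Inl q \<Rightarrow> - 2 * B $ q $ p
                          | Inr q \<Rightarrow> \<beta> * (if p = q then 1 else 0)))"

definition stack :: "complex^'m \<Rightarrow> complex^'n \<Rightarrow> complex^('m+'n)" where
  "stack u v = (\<chi> i. case i of Inl p \<Rightarrow> u $ p | Inr q \<Rightarrow> v $ q)"

definition cdot :: "complex^'m \<Rightarrow> complex^'m \<Rightarrow> complex" where
  "cdot x y = (\<Sum>i\<in>UNIV. cnj (x $ i) * y $ i)"

end

theory Submission
  imports Defs
begin


lemma eig_indep:
  fixes M :: "'a::field^'n^'n"
  assumes "finite X" "\<forall>x\<in>X. x \<noteq> 0 \<and> M *v x = e x *s x" "inj_on e X"
  shows "vec.independent X"
  using assms
proof (induction X rule: finite_induct)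
  case empty
  then show ?case by (simp add: vec.independent_empty)
next
  case (insert x X)
  have IX: "vec.independent X" using insert by (auto simp: inj_on_insert)
  have "x \<notin> vec.span X"
  proof
    assume "x \<in> vec.span X"
    then obtain c where c: "x = (\<Sum>v\<in>X. c v *s v)" using vec.span_finite[OF insert(1)] by auto
    have "M *v x = (\<Sum>v\<in>X. (c v * e v) *s v)"
    proof -
      have "M *v x = (\<Sum>v\<in>X. M *v (c v *s v))" unfolding c by (rule vec.sum)
      also have "\<dots> = (\<Sum>v\<in>X. c v *s (M *v v))" by (simp add: vec.scale)
      also have "\<dots> = (\<Sum>v\<in>X. (c v * e v) *s v)" using insert(4) by (intro sum.cong) auto
      finally show ?thesis .
    qed
    moreover have "e x *s x = (\<Sum>v\<in>X. (c v * e x) *s v)"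
      unfolding c vec.scale_sum_right by (simp add: mult.commute)
    ultimately have "(\<Sum>v\<in>X. (c v * e v) *s v) - (\<Sum>v\<in>X. (c v * e x) *s v) = 0"
      using insert(4) by auto
    hence hs: "(\<Sum>v\<in>X. (c v * (e v - e x)) *s v) = 0"
      by (simp add: sum_subtractf[symmetric] vec.scale_left_diff_distrib right_diff_distrib)
    have ha: "\<forall>d. (\<Sum>v\<in>X. d v *s v) = 0 \<longrightarrow> (\<forall>v\<in>X. d v = 0)"
      using IX vec.independent_explicit by blast
    have z: "\<forall>v\<in>X. c v * (e v - e x) = 0" using ha[rule_format, of "\<lambda>v. c v * (e v - e x)"] hs by simp
    have "\<forall>v\<in>X. c v = 0"
    proof
      fix v assume "v \<in> X"
      hence "e v \<noteq> e x" using insert(2,5) by (auto simp: inj_on_def)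
      thus "c v = 0" using z \<open>v\<in>X\<close> by auto
    qed
    hence "x = 0" using c by simp
    thus False using insert(4) by auto
  qed
  then show ?case using IX by (rule vec.independent_insertI)
qed

lemma eig_finite:
  fixes M :: "'a::field^'n^'n"
  shows "finite {l. \<exists>x. x \<noteq> 0 \<and> M *v x = l *s x}"
proof -
  let ?E = "{l. \<exists>x. x \<noteq> 0 \<and> M *v x = l *s x}"
  have "finite ?E \<and> card ?E \<le> CARD('n)"
  proof (rule finite_if_finite_subsets_card_bdd)
    fix G assume G: "G \<subseteq> ?E" "finite G"
    define f where "f l = (SOME x. x \<noteq> 0 \<and> M *v x = l *s x)" for l
    have f: "\<forall>l\<in>G. f l \<noteq> 0 \<and> M *v f l = l *s f l"
    proof
      fix l assume "l \<in> G"
      hence "\<exists>x. x \<noteq> 0 \<and> M *v x = l *s x" using G(1) by auto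
      from someI_ex[OF this] show "f l \<noteq> 0 \<and> M *v f l = l *s f l" unfolding f_def .
    qed
    have inj: "inj_on f G"
    proof (rule inj_onI)
      fix a b assume ab: "a \<in> G" "b \<in> G" "f a = f b"
      hence "a *s f a = b *s f a" using f by metis
      thus "a = b" using f ab by auto
    qed
    define e where "e = inv_into G f"
    have "vec.independent (f ` G)"
    proof (rule eig_indep[where e = e])
      show "finite (f ` G)" using G by auto
      show "\<forall>x\<in>f ` G. x \<noteq> 0 \<and> M *v x = e x *s x" using f inj by (auto simp: e_def)
      show "inj_on e (f ` G)" unfolding e_def using inj by (simp add: inj_on_inv_into)
    qed
    hence "card (f ` G) \<le> vec.dim (f ` G)" using vec.independent_bound_general by blast
    also have "\<dots> \<le> CARD('n)" by (rule dim_subset_UNIV_cart_gen)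
    finally show "card G \<le> CARD('n)" using card_image[OF inj] by simp
  qed
  thus ?thesis by simp
qed



lemma inner_mat_sym:
  fixes M :: "real^'n^'m"
  shows "x \<bullet> (M *v y) = (transpose M *v x) \<bullet> y"
  unfolding inner_vec_def matrix_vector_mult_def transpose_def
  apply (simp add: sum_distrib_left sum_distrib_right)
  apply (subst sum.swap)
  apply (simp add: mult_ac)
  done

lemma quad_lemma:
  fixes a b :: real
  assumes "\<forall>t. 2*t*a + t^2 * b \<le> 0" "b \<le> 0" "a \<ge> 0"
  shows "a = 0"
proof (rule ccontr)
  assume "a \<noteq> 0"
  hence a: "a > 0" using assms(3) by simp
  define t where "t = a / (1 - b)"
  have t: "t > 0" using a assms(2) by (simp add: t_def)
  have "t * (2*a + t*b) \<le> 0" using assms(1)[rule_format, of t] by (simp add: power2_eq_square algebra_simps)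
  hence h: "2*a + t*b \<le> 0" using t by (simp add: mult_le_0_iff)
  have "t*b = a * (b/(1-b))" by (simp add: t_def)
  moreover have "b/(1-b) \<ge> -1" using assms(2) by (simp add: field_simps)
  ultimately have "t*b \<ge> a * (-1)" using a mult_left_mono[of "-1" "b/(1-b)" a] by simp
  hence "t*b \<ge> -a" by simp
  thus False using h a by linarith
qed

lemma sym_max_eig:
  fixes H :: "real^'n^'n"
  assumes sym: "transpose H = H"
  shows "\<exists>x l. x \<noteq> 0 \<and> H *v x = l *s x \<and> (\<forall>y. y \<bullet> (H *v y) \<le> l * (y \<bullet> y))"
proof -
  let ?q = "\<lambda>y::real^'n. y \<bullet> (H *v y)"
  have "compact (sphere (0::real^'n) 1)" by simp
  moreover have "sphere (0::real^'n) 1 \<noteq> {}" by simp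
  moreover have "continuous_on (sphere 0 1) ?q"
    by (intro continuous_intros continuous_on_compose2[OF _ continuous_on_id] linear_continuous_on
        matrix_vector_mul_linear) auto
  ultimately obtain x where x: "x \<in> sphere 0 1" "\<forall>y\<in>sphere 0 1. ?q y \<le> ?q x"
    using continuous_attains_sup by blast
  define l where "l = ?q x"
  have nx: "norm x = 1" using x by simp
  hence xx: "x \<bullet> x = 1" by (simp add: dot_square_norm)
  have bound: "?q y \<le> l * (y \<bullet> y)" for y
  proof (cases "y = 0")
    case True then show ?thesis by simp
  next
    case False
    let ?z = "(1/norm y) *\<^sub>R y"
    have "?z \<in> sphere 0 1" using False by simp
    hence "?q ?z \<le> l" using x l_def by blast
    hence "(1/norm y)^2 * ?q y \<le> l"
      by (simp add: matrix_vector_mult_scaleR power2_eq_square)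
    hence "?q y \<le> l * (norm y)^2" using False
      by (simp add: field_simps)
    thus ?thesis by (simp add: dot_square_norm)
  qed
  define w where "w = H *v x - l *\<^sub>R x"
  have symq: "a \<bullet> (H *v b) = b \<bullet> (H *v a)" for a b
    using inner_mat_sym[of a H b] sym by (simp add: inner_commute)
  have "\<forall>t. 2*t*(w \<bullet> w) + t^2 * (?q w - l * (w \<bullet> w)) \<le> 0"
  proof
    fix t :: real
    have "?q (x + t *\<^sub>R w) \<le> l * ((x + t *\<^sub>R w) \<bullet> (x + t *\<^sub>R w))" by (rule bound)
    moreover have "?q (x + t *\<^sub>R w) = l + 2*t*(w \<bullet> (H *v x)) + t^2 * ?q w"
      using symq[of x w] unfolding l_def
      by (simp add: matrix_vector_right_distrib matrix_vector_mult_scaleR inner_add_left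
          inner_add_right power2_eq_square algebra_simps)
    moreover have "(x + t *\<^sub>R w) \<bullet> (x + t *\<^sub>R w) = 1 + 2*t*(w \<bullet> x) + t^2 * (w \<bullet> w)"
      using xx by (simp add: inner_add_left inner_add_right power2_eq_square algebra_simps inner_commute)
    moreover have "w \<bullet> w = w \<bullet> (H *v x) - l * (w \<bullet> x)"
      unfolding w_def by (simp add: inner_diff_right)
    ultimately have "l + 2*t*(w \<bullet> (H *v x)) + t^2 * ?q w \<le> l * (1 + 2*t*(w \<bullet> x) + t^2 * (w \<bullet> w))"
      and e0: "w \<bullet> w = w \<bullet> (H *v x) - l * (w \<bullet> x)" by simp_all
    moreover have "t*(w \<bullet> w) = t*(w \<bullet> (H *v x)) - t*l*(w \<bullet> x)" by (subst e0) (simp add: right_diff_distrib)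
    moreover have "t^2*l*(w \<bullet> w) = t^2*l*(w \<bullet> (H *v x)) - t^2*l*l*(w \<bullet> x)" by (subst e0) (simp add: right_diff_distrib)
    ultimately show "2*t*(w \<bullet> w) + t^2 * (?q w - l * (w \<bullet> w)) \<le> 0"
      by (simp add: algebra_simps)
  qed
  hence "w \<bullet> w = 0" using bound[of w] by (intro quad_lemma) auto
  hence "H *v x = l *s x" unfolding w_def by (simp add: scalar_mult_eq_scaleR)
  moreover have "x \<noteq> 0" using nx by auto
  ultimately show ?thesis using bound by blast
qed



definition re_v :: "complex^'n \<Rightarrow> real^'n" where "re_v u = (\<chi> i. Re (u $ i))"
definition im_v :: "complex^'n \<Rightarrow> real^'n" where "im_v u = (\<chi> i. Im (u $ i))"
definition cv :: "real^'n \<Rightarrow> complex^'n" where "cv x = (\<chi> i. complex_of_real (x $ i))"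

lemma cmat_cv: "cmat M *v cv x = cv (M *v x)"
  by (simp add: vec_eq_iff matrix_vector_mult_def cmat_def cv_def)

lemma cmat_mult: "cmat (X ** Y) = cmat X ** cmat Y"
  by (simp add: vec_eq_iff matrix_matrix_mult_def cmat_def)

lemma cmat_one: "cmat (mat 1) = mat 1"
  by (simp add: vec_eq_iff mat_def cmat_def)

lemma cdot_quad:
  fixes M :: "real^'n^'n"
  shows "cdot u (cmat M *v u) = Complex (re_v u \<bullet> (M *v re_v u) + im_v u \<bullet> (M *v im_v u))
                                       (re_v u \<bullet> (M *v im_v u) - im_v u \<bullet> (M *v re_v u))"
  by (simp add: complex_eq_iff cdot_def cmat_def matrix_vector_mult_def inner_vec_def re_v_def im_v_def
      Re_sum Im_sum sum_distrib_left sum_subtractf[symmetric] sum.distrib[symmetric] algebra_simps)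

lemma cdot_self: "cdot u u = complex_of_real (re_v u \<bullet> re_v u + im_v u \<bullet> im_v u)"
  by (simp add: complex_eq_iff cdot_def inner_vec_def re_v_def im_v_def Re_sum Im_sum
      sum.distrib[symmetric] power2_eq_square algebra_simps)

lemma re_im_zero: "re_v u = 0 \<Longrightarrow> im_v u = 0 \<Longrightarrow> u = 0"
  by (simp add: vec_eq_iff re_v_def im_v_def complex_eq_iff)

lemma cdot_self_pos: "u \<noteq> 0 \<Longrightarrow> re_v u \<bullet> re_v u + im_v u \<bullet> im_v u > 0"
  using re_im_zero[of u]
  by (metis add_nonneg_pos add_pos_nonneg inner_ge_zero inner_gt_zero_iff order_le_less)

lemma cdot_scale: "cdot u (a *s w) = a * cdot u w"
  by (simp add: cdot_def sum_distrib_left mult_ac)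

lemma cdot_add: "cdot u (w + w') = cdot u w + cdot u w'"
  by (simp add: cdot_def sum.distrib algebra_simps)

lemma cdot_neg: "cdot u (- w) = - cdot u w"
  by (simp add: cdot_def sum_negf)

lemma cdot_adj:
  fixes B :: "real^'n^'m"
  shows "cdot u (cmat B *v v) = cdot (cmat (transpose B) *v u) v"
  unfolding cdot_def cmat_def matrix_vector_mult_def transpose_def
  apply (simp add: sum_distrib_left sum_distrib_right cnj_sum)
  apply (subst sum.swap)
  apply (simp add: mult_ac)
  done



definition topv :: "'a^('m::finite+'n::finite) \<Rightarrow> 'a^'m" where "topv z = (\<chi> p. z $ Inl p)"
definition botv :: "'a^('m::finite+'n::finite) \<Rightarrow> 'a^'n" where "botv z = (\<chi> q. z $ Inr q)"

lemma sum_plus_univ: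
  fixes g :: "('m::finite + 'n::finite) \<Rightarrow> 'a::comm_monoid_add"
  shows "(\<Sum>i\<in>UNIV. g i) = (\<Sum>p\<in>UNIV. g (Inl p)) + (\<Sum>q\<in>UNIV. g (Inr q))"
  by (subst UNIV_Plus_UNIV[symmetric], subst sum.Plus) auto

lemma sum_delta_aux:
  fixes f g :: "'q::finite \<Rightarrow> 'a::comm_ring_1"
  shows "(\<Sum>q\<in>UNIV. f q * (a * (if p = q then 1 else 0) + g q)) = a * f p + (\<Sum>q\<in>UNIV. f q * g q)"
proof -
  have "(\<Sum>q\<in>UNIV. f q * (a * (if p = q then 1 else 0) + g q))
      = (\<Sum>q\<in>UNIV. (if q = p then a * f q else 0)) + (\<Sum>q\<in>UNIV. f q * g q)"
    by (subst sum.distrib[symmetric], rule sum.cong) (auto simp: algebra_simps)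
  thus ?thesis by simp
qed

lemma ifm: "x * (if b then 1 else 0) = (if b then x else (0::'a::semiring_1))" by simp
lemma ofr_if: "complex_of_real (if b then 1 else 0) = (if b then 1 else 0)" by simp

lemma sd1: fixes f :: "'q::finite \<Rightarrow> complex" shows "(\<Sum>q\<in>UNIV. f q * complex_of_real (if p = q then c else 0)) = f p * complex_of_real c"
proof -
  have "(\<Sum>q\<in>UNIV. f q * complex_of_real (if p = q then c else 0)) = (\<Sum>q\<in>UNIV. if q = p then f q * complex_of_real c else 0)"
    by (rule sum.cong) auto
  thus ?thesis by simp
qed

lemma sd2: fixes f :: "'q::finite \<Rightarrow> 'a::comm_ring_1" shows "(\<Sum>q\<in>UNIV. c * (f q * (if p = q then 1 else 0))) = c * f p"
proof -
  have "(\<Sum>q\<in>UNIV. c * (f q * (if p = q then 1 else 0))) = (\<Sum>q\<in>UNIV. if q = p then c * f q else 0)"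
    by (rule sum.cong) auto
  thus ?thesis by simp
qed

lemma P_top:
  "(P_MGSSP \<alpha> \<beta> A B *v z) $ Inl p = \<alpha> * z $ Inl p + 2 * (A *v topv z) $ p + 2 * (B *v botv z) $ p"
  by (simp add: matrix_vector_mult_def P_MGSSP_def sum_plus_univ topv_def botv_def
      sum_delta_aux sum_distrib_left mult_ac)

lemma P_bot:
  "(P_MGSSP \<alpha> \<beta> A B *v z) $ Inr q = - 2 * (transpose B *v topv z) $ q + \<beta> * z $ Inr q"
  by (simp add: matrix_vector_mult_def P_MGSSP_def sum_plus_univ topv_def botv_def transpose_def
      sum_delta_aux sum_distrib_left mult_ac sd2 sum.distrib distrib_left sum_negf)

lemma cP_top:
  "(cmat (P_MGSSP \<alpha> \<beta> A B) *v z) $ Inl p = of_real \<alpha> * z $ Inl p + 2 * (cmat A *v topv z) $ p + 2 * (cmat B *v botv z) $ p"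
  by (simp add: matrix_vector_mult_def P_MGSSP_def cmat_def sum_plus_univ topv_def botv_def
      sum_delta_aux sum_distrib_left mult_ac ofr_if ifm distrib_left sum.distrib if_distrib[of "\<lambda>x. _ * x"] sd1 sd2 cong: if_cong)

lemma cP_bot:
  "(cmat (P_MGSSP \<alpha> \<beta> A B) *v z) $ Inr q = - 2 * (cmat (transpose B) *v topv z) $ q + of_real \<beta> * z $ Inr q"
  by (simp add: matrix_vector_mult_def P_MGSSP_def cmat_def sum_plus_univ topv_def botv_def transpose_def
      sum_delta_aux sum_distrib_left mult_ac sum_negf ifm ofr_if distrib_left sum.distrib if_distrib[of "\<lambda>x. _ * x"] sd1 sd2 cong: if_cong)

lemma cK_top:
  "(cmat (saddle_mat A B) *v z) $ Inl p = (cmat A *v topv z) $ p + (cmat B *v botv z) $ p"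
  by (simp add: matrix_vector_mult_def saddle_mat_def cmat_def sum_plus_univ topv_def botv_def)

lemma cK_bot:
  "(cmat (saddle_mat A B) *v z) $ Inr q = - (cmat (transpose B) *v topv z) $ q"
  by (simp add: matrix_vector_mult_def saddle_mat_def cmat_def sum_plus_univ topv_def botv_def transpose_def sum_negf)

lemma topv_stack[simp]: "topv (stack u v) = u" and botv_stack[simp]: "botv (stack u v) = v"
  by (simp_all add: vec_eq_iff topv_def botv_def stack_def)

lemma topv_botv_zero: "topv z = 0 \<Longrightarrow> botv z = 0 \<Longrightarrow> z = 0"
  apply (simp add: vec_eq_iff topv_def botv_def)
  by (metis sum.exhaust)



abbreviation "reig M \<equiv> {l. \<exists>x. x \<noteq> 0 \<and> M *v x = l *s x}"

lemma neg_mv: fixes H :: "real^'n^'m" shows "(-H) *v x = - (H *v x)"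
  unfolding vec_eq_iff matrix_vector_mult_def by (auto simp flip: sum_negf)

lemma sym_min_eig:
  fixes H :: "real^'n^'n"
  assumes sym: "transpose H = H"
  shows "\<exists>l \<in> reig H. \<forall>y. l * (y \<bullet> y) \<le> y \<bullet> (H *v y)"
proof -
  have "transpose (-H) = -H" using sym by (simp add: vec_eq_iff transpose_def)
  from sym_max_eig[OF this] obtain x l where x: "x \<noteq> 0" "(-H) *v x = l *s x"
    "\<forall>y. y \<bullet> ((-H) *v y) \<le> l * (y \<bullet> y)" by blast
  have "H *v x = (-l) *s x" using x(2) by (simp add: neg_mv vec_eq_iff) (metis minus_equation_iff)
  moreover have "\<forall>y. (-l) * (y \<bullet> y) \<le> y \<bullet> (H *v y)" using x(3)
    by (simp add: neg_mv) (metis minus_le_iff)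
  ultimately show ?thesis using x(1) by blast
qed

lemma sym_max_eig':
  fixes H :: "real^'n^'n"
  assumes sym: "transpose H = H"
  shows "\<exists>l \<in> reig H. \<forall>y. y \<bullet> (H *v y) \<le> l * (y \<bullet> y)"
  using sym_max_eig[OF sym] by blast

lemma eig_quad: "M *v x = l *s x \<Longrightarrow> x \<bullet> (M *v x) = l * (x \<bullet> x)"
  by (simp add: scalar_mult_eq_scaleR)

lemma lambda_min_le:
  fixes H :: "real^'n^'n"
  assumes sym: "transpose H = H" and pos: "\<forall>x. x \<noteq> 0 \<longrightarrow> x \<bullet> (H *v x) \<ge> 0"
  shows "lambda_min H \<ge> 0 \<and> (\<forall>y z. lambda_min H * (y \<bullet> y + z \<bullet> z) \<le> y \<bullet> (H *v y) + z \<bullet> (H *v z))"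
    and "(\<forall>x. x \<noteq> 0 \<longrightarrow> x \<bullet> (H *v x) > 0) \<Longrightarrow> lambda_min H > 0"
proof -
  have fin: "finite (reig H)" by (rule eig_finite)
  obtain lm where lm: "lm \<in> reig H" "\<forall>y. lm * (y \<bullet> y) \<le> y \<bullet> (H *v y)" using sym_min_eig[OF sym] by blast
  have ne: "reig H \<noteq> {}" using lm by blast
  have Mle: "lambda_min H \<le> lm" unfolding lambda_min_def using fin lm(1) by (rule Min_le)
  have Min_in: "lambda_min H \<in> reig H" unfolding lambda_min_def using fin ne by (rule Min_in)
  then obtain x0 where x0: "x0 \<noteq> 0" "H *v x0 = lambda_min H *s x0" by blast
  have q: "x0 \<bullet> (H *v x0) = lambda_min H * (x0 \<bullet> x0)" using eig_quad[OF x0(2)] .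
  have xx: "x0 \<bullet> x0 > 0" using x0 by simp
  have "lambda_min H \<ge> 0" using pos x0 q xx by (metis zero_le_mult_iff linorder_not_le)
  moreover have "lambda_min H * (y \<bullet> y + z \<bullet> z) \<le> y \<bullet> (H *v y) + z \<bullet> (H *v z)" for y z
  proof -
    have "lambda_min H * (y \<bullet> y) \<le> lm * (y \<bullet> y)" using Mle by (simp add: mult_right_mono)
    moreover have "lambda_min H * (z \<bullet> z) \<le> lm * (z \<bullet> z)" using Mle by (simp add: mult_right_mono)
    ultimately show ?thesis using lm(2)[rule_format, of y] lm(2)[rule_format, of z] by (simp add: distrib_left)
  qed
  ultimately show "lambda_min H \<ge> 0 \<and> (\<forall>y z. lambda_min H * (y \<bullet> y + z \<bullet> z) \<le> y \<bullet> (H *v y) + z \<bullet> (H *v z))" by blast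
  assume "\<forall>x. x \<noteq> 0 \<longrightarrow> x \<bullet> (H *v x) > 0"
  hence "0 < lambda_min H * (x0 \<bullet> x0)" using x0 q by auto
  thus "lambda_min H > 0" using xx by (simp add: zero_less_mult_iff)
qed

lemma spec_radius_ge:
  fixes M :: "real^'n^'n"
  assumes "xc \<noteq> 0" "cmat M *v xc = lc *s xc"
  shows "cmod lc \<le> spec_radius M"
proof -
  have "{cmod l | l. \<exists>x::complex^'n. x \<noteq> 0 \<and> cmat M *v x = l *s x} = cmod ` {l. \<exists>x::complex^'n. x \<noteq> 0 \<and> cmat M *v x = l *s x}"
    by blast
  moreover have "finite {l. \<exists>x::complex^'n. x \<noteq> 0 \<and> cmat M *v x = l *s x}" by (rule eig_finite)
  ultimately have "finite {cmod l | l. \<exists>x::complex^'n. x \<noteq> 0 \<and> cmat M *v x = l *s x}" by simp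
  moreover have "cmod lc \<in> {cmod l | l. \<exists>x::complex^'n. x \<noteq> 0 \<and> cmat M *v x = l *s x}" using assms by blast
  ultimately show ?thesis unfolding spec_radius_def by (rule Max_ge)
qed

lemma cv_nz: "x \<noteq> 0 \<Longrightarrow> cv x \<noteq> 0"
  by (simp add: vec_eq_iff cv_def)

lemma cv_scale: "cv (l *s x) = complex_of_real l *s cv x"
  by (simp add: vec_eq_iff cv_def)

lemma spec_radius_real:
  fixes M :: "real^'n^'n"
  assumes "l \<in> reig M"
  shows "\<bar>l\<bar> \<le> spec_radius M"
proof -
  obtain x where x: "x \<noteq> 0" "M *v x = l *s x" using assms by blast
  have "cmat M *v cv x = complex_of_real l *s cv x" using x by (simp add: cmat_cv cv_scale)
  from spec_radius_ge[OF cv_nz[OF x(1)] this] show ?thesis by simp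
qed

lemma spec_radius_sym:
  fixes M :: "real^'n^'n"
  assumes sym: "transpose M = M"
  shows "\<forall>y z. y \<bullet> (M *v y) + z \<bullet> (M *v z) \<le> spec_radius M * (y \<bullet> y + z \<bullet> z)"
proof (intro allI)
  fix y z :: "real^'n"
  obtain l where l: "l \<in> reig M" "\<forall>y. y \<bullet> (M *v y) \<le> l * (y \<bullet> y)" using sym_max_eig'[OF sym] by blast
  have "l \<le> spec_radius M" using spec_radius_real[OF l(1)] by simp
  hence "l * (y \<bullet> y + z \<bullet> z) \<le> spec_radius M * (y \<bullet> y + z \<bullet> z)"
    by (simp add: mult_right_mono add_nonneg_nonneg)
  thus "y \<bullet> (M *v y) + z \<bullet> (M *v z) \<le> spec_radius M * (y \<bullet> y + z \<bullet> z)"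
    using l(2)[rule_format, of y] l(2)[rule_format, of z] by (simp add: distrib_left)
qed



lemma quad_STS:
  fixes S :: "real^'n^'n"
  shows "z \<bullet> ((transpose S ** S) *v z) = (S *v z) \<bullet> (S *v z)"
  using inner_mat_sym[of z "transpose S" "S *v z"] by (simp add: matrix_vector_mul_assoc[symmetric])

lemma spec_radius_skew:
  fixes S :: "real^'n^'n"
  assumes skew: "transpose S = -S"
  shows "2 * \<bar>x \<bullet> (S *v y)\<bar> \<le> spec_radius S * (x \<bullet> x + y \<bullet> y)"
proof -
  let ?M = "transpose S ** S"
  have sym: "transpose ?M = ?M" by (simp add: matrix_transpose_mul)
  obtain lx where lx: "lx \<in> reig ?M" "\<forall>z. z \<bullet> (?M *v z) \<le> lx * (z \<bullet> z)" using sym_max_eig'[OF sym] by blast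
  obtain e where e: "e \<noteq> 0" "?M *v e = lx *s e" using lx(1) by blast
  have ee: "e \<bullet> e > 0" using e by simp
  have "lx * (e \<bullet> e) = (S *v e) \<bullet> (S *v e)" using eig_quad[OF e(2)] quad_STS[of e S] by simp
  hence lx0: "lx \<ge> 0" using ee by (metis inner_ge_zero zero_le_mult_iff linorder_not_le)
  define \<sigma> where "\<sigma> = sqrt lx"
  have s0: "\<sigma> \<ge> 0" and s2: "\<sigma>^2 = lx" using lx0 by (simp_all add: \<sigma>_def)
  have SSe: "S *v (S *v e) = (- lx) *s e"
  proof -
    have "?M *v e = (-S) *v (S *v e)" using skew by (simp add: matrix_vector_mul_assoc)
    also have "\<dots> = - (S *v (S *v e))" by (rule neg_mv)
    finally show ?thesis using e(2) by (simp add: vec_eq_iff)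
  qed
  have sig_le: "\<sigma> \<le> spec_radius S"
  proof (cases "lx = 0")
    case True
    hence "(S *v e) \<bullet> (S *v e) = 0" using \<open>lx * (e \<bullet> e) = (S *v e) \<bullet> (S *v e)\<close> by simp
    hence "S *v e = 0" by simp
    hence "cmat S *v cv e = 0 *s cv e" unfolding cmat_cv by (simp add: cv_def vec_eq_iff)
    from spec_radius_ge[OF cv_nz[OF e(1)] this] show ?thesis using True by (simp add: \<sigma>_def)
  next
    case False
    hence sp: "\<sigma> > 0" using lx0 by (simp add: \<sigma>_def)
    define wv where "wv = cv (S *v e) + (\<i> * complex_of_real \<sigma>) *s cv e"
    obtain i where i: "e $ i \<noteq> 0" using e(1) by (auto simp: vec_eq_iff)
    have "Im (wv $ i) = \<sigma> * e $ i" by (simp add: wv_def cv_def)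
    hence "wv \<noteq> 0" using i sp by auto
    moreover have "cmat S *v wv = (\<i> * complex_of_real \<sigma>) *s wv"
    proof -
      have "cmat S *v wv = cv (S *v (S *v e)) + (\<i> * complex_of_real \<sigma>) *s cv (S *v e)"
        unfolding wv_def by (simp add: matrix_vector_right_distrib vec.scale cmat_cv)
      also have "\<dots> = (\<i> * complex_of_real \<sigma>) *s wv"
        unfolding SSe wv_def using s2
        by (simp add: vec_eq_iff cv_def algebra_simps power2_eq_square complex_eq_iff)
      finally show ?thesis .
    qed
    ultimately have "cmod (\<i> * complex_of_real \<sigma>) \<le> spec_radius S" by (rule spec_radius_ge)
    thus ?thesis using s0 by (simp add: norm_mult)
  qed
  have Sy: "norm (S *v y) \<le> \<sigma> * norm y"
  proof -
    have "(norm (S *v y))^2 \<le> (\<sigma> * norm y)^2"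
      using lx(2)[rule_format, of y] quad_STS[of y S] s2
      by (simp add: power_mult_distrib dot_square_norm[symmetric] power2_norm_eq_inner)
    thus ?thesis using s0 by (simp add: power2_le_iff_abs_le)
  qed
  have "2 * \<bar>x \<bullet> (S *v y)\<bar> \<le> 2 * (norm x * norm (S *v y))" using Cauchy_Schwarz_ineq2 by simp
  also have "\<dots> \<le> 2 * (norm x * (\<sigma> * norm y))" using Sy by (simp add: mult_left_mono)
  also have "\<dots> = \<sigma> * (2 * norm x * norm y)" by simp
  also have "\<dots> \<le> \<sigma> * ((norm x)^2 + (norm y)^2)"
    using s0 by (intro mult_left_mono) (auto simp: sum_squares_bound)
  also have "\<dots> \<le> spec_radius S * ((norm x)^2 + (norm y)^2)"
    using sig_le by (simp add: mult_right_mono)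
  finally show ?thesis by (simp add: power2_norm_eq_inner)
qed



lemma zsq:
  fixes a2 b2 r z1 z2 s :: real
  assumes r: "r = sqrt (a2^2 + b2^2)" and z1: "z1 = sqrt ((r + a2)/2)"
    and z2: "z2 = s * sqrt ((r - a2)/2)" and s: "s = 1 \<or> s = -1" and sb: "s * \<bar>b2\<bar> = b2"
  shows "z1^2 - z2^2 = a2 \<and> 2 * z1 * z2 = b2"
proof -
  have ra: "\<bar>a2\<bar> \<le> r" unfolding r by (rule real_sqrt_ge_abs1 [unfolded power2_eq_square[symmetric]]) 
  have rr: "r^2 = a2^2 + b2^2" unfolding r by simp
  have s2: "s^2 = 1" using s by auto
  have "z1^2 = (r + a2)/2" unfolding z1 using ra by simp
  moreover have "z2^2 = (r - a2)/2" unfolding z2 using ra s2 by (simp add: power_mult_distrib)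
  moreover have "2 * z1 * z2 = s * sqrt (r^2 - a2^2)"
  proof -
    have "2 * z1 * z2 = s * (2 * sqrt (((r + a2)/2) * ((r - a2)/2)))" unfolding z1 z2 real_sqrt_mult by (simp add: mult_ac)
    also have "2 * sqrt (((r + a2)/2) * ((r - a2)/2)) = sqrt (4 * (((r + a2)/2) * ((r - a2)/2)))"
    proof -
      have four: "sqrt (4::real) = 2" by (rule real_sqrt_unique) auto
      show ?thesis by (subst real_sqrt_mult) (simp only: four)
    qed
    also have "4 * (((r + a2)/2) * ((r - a2)/2)) = r^2 - a2^2" by (simp add: field_simps power2_eq_square)
    finally show ?thesis .
  qed
  moreover have "sqrt (r^2 - a2^2) = \<bar>b2\<bar>" using rr by simp
  ultimately show ?thesis using sb by simp
qed

lemma zbounds: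
  fixes \<alpha> \<beta> a1 b1 c1 a2 b2 r z1 z2 s :: real
  assumes "\<beta> > 0" "\<alpha> \<ge> 0" "a1 > 0" "c1 \<ge> 0"
    and a2: "a2 = \<beta>^2 * (a1^2 - b1^2) - 4 * \<alpha> * \<beta> * c1" and b2: "b2 = 2 * \<beta>^2 * a1 * b1"
    and r: "r = sqrt (a2^2 + b2^2)" and z1: "z1 = sqrt ((r + a2)/2)"
    and z2: "z2 = s * sqrt ((r - a2)/2)" and s: "s = 1 \<or> s = -1"
  shows "0 \<le> z1 \<and> z1 \<le> \<beta> * a1 \<and> \<bar>z2\<bar> \<le> sqrt (\<beta>^2 * b1^2 + 4 * \<alpha> * \<beta> * c1)"
proof -
  define R where "R = \<beta>^2 * (a1^2 + b1^2) + 4 * \<alpha> * \<beta> * c1"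
  have K: "4 * \<alpha> * \<beta> * c1 \<ge> 0" using assms by simp
  have R0: "R \<ge> 0" unfolding R_def using K by simp
  have "a2^2 + b2^2 \<le> R^2"
  proof -
    have "a2^2 + b2^2 = (\<beta>^2 * (a1^2 + b1^2))^2 - 2 * (4*\<alpha>*\<beta>*c1) * (\<beta>^2 * (a1^2 - b1^2)) + (4*\<alpha>*\<beta>*c1)^2"
      unfolding a2 b2 by algebra
    moreover have "(4*\<alpha>*\<beta>*c1) * (\<beta>^2 * (a1^2 - b1^2)) \<ge> - ((4*\<alpha>*\<beta>*c1) * (\<beta>^2 * (a1^2 + b1^2)))"
    proof -
      have "\<beta>^2 * (a1^2 - b1^2) \<ge> - (\<beta>^2 * (a1^2 + b1^2))" by (simp add: algebra_simps)
      from mult_left_mono[OF this K] show ?thesis by simp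
    qed
    moreover have "R^2 = (\<beta>^2 * (a1^2 + b1^2))^2 + 2 * (4*\<alpha>*\<beta>*c1) * (\<beta>^2 * (a1^2 + b1^2)) + (4*\<alpha>*\<beta>*c1)^2"
      unfolding R_def by algebra
    ultimately show ?thesis by linarith
  qed
  hence "sqrt (a2^2 + b2^2) \<le> sqrt (R^2)" by (rule real_sqrt_le_mono)
  hence rR: "r \<le> R" unfolding r using R0 by simp
  have ra: "\<bar>a2\<bar> \<le> r" unfolding r by (rule real_sqrt_ge_abs1 [unfolded power2_eq_square[symmetric]])
  have "(r + a2)/2 \<le> (\<beta> * a1)^2" using rR unfolding R_def a2 by (simp add: power2_eq_square algebra_simps)
  hence "sqrt ((r + a2)/2) \<le> sqrt ((\<beta> * a1)^2)" by (rule real_sqrt_le_mono)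
  hence "z1 \<le> \<beta> * a1" unfolding z1 using assms by simp
  moreover have "0 \<le> z1" unfolding z1 using ra by simp
  moreover have "\<bar>z2\<bar> \<le> sqrt (\<beta>^2 * b1^2 + 4 * \<alpha> * \<beta> * c1)"
  proof -
    have "\<bar>z2\<bar> = sqrt ((r - a2)/2)" unfolding z2 using s ra by (auto simp: abs_mult)
    moreover have "(r - a2)/2 \<le> \<beta>^2 * b1^2 + 4 * \<alpha> * \<beta> * c1" using rR unfolding R_def a2
      by (simp add: power2_eq_square algebra_simps)
    ultimately show ?thesis by simp
  qed
  ultimately show ?thesis by simp
qed

lemma num_bound:
  fixes \<alpha> \<beta> a1 b1 c1 z1 z2 :: real
  assumes "\<beta> > 0" "\<alpha> \<ge> 0" "a1 > 0"
    and z: "0 \<le> z1" "z1 \<le> \<beta> * a1" "\<bar>z2\<bar> \<le> Q"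
  shows "(z1 - \<alpha>*\<beta> - \<beta>*a1)^2 + (z2 - \<beta>*b1)^2 \<le> (\<alpha>*\<beta> + 2*\<beta>*a1)^2 + (\<beta>*\<bar>b1\<bar> + Q)^2"
    and "(z1 + \<alpha>*\<beta> + \<beta>*a1)^2 + (z2 + \<beta>*b1)^2 \<le> (\<alpha>*\<beta> + 2*\<beta>*a1)^2 + (\<beta>*\<bar>b1\<bar> + Q)^2"
proof -
  have ab: "\<alpha>*\<beta> \<ge> 0" "\<beta>*a1 > 0" using assms by simp_all
  have bb: "\<bar>\<beta>*b1\<bar> = \<beta>*\<bar>b1\<bar>" using assms by (simp add: abs_mult)
  have h1: "\<bar>z1 - \<alpha>*\<beta> - \<beta>*a1\<bar> \<le> \<alpha>*\<beta> + 2*\<beta>*a1" using ab z by linarith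
  have h2: "\<bar>z1 + \<alpha>*\<beta> + \<beta>*a1\<bar> \<le> \<alpha>*\<beta> + 2*\<beta>*a1" using ab z by linarith
  have h3: "\<bar>z2 - \<beta>*b1\<bar> \<le> \<beta>*\<bar>b1\<bar> + Q" using z bb by linarith
  have h4: "\<bar>z2 + \<beta>*b1\<bar> \<le> \<beta>*\<bar>b1\<bar> + Q" using z bb by linarith
  show "(z1 - \<alpha>*\<beta> - \<beta>*a1)^2 + (z2 - \<beta>*b1)^2 \<le> (\<alpha>*\<beta> + 2*\<beta>*a1)^2 + (\<beta>*\<bar>b1\<bar> + Q)^2"
    using h1 h3 by (intro add_mono) (simp_all add: abs_le_square_iff power2_le_iff_abs_le)
  show "(z1 + \<alpha>*\<beta> + \<beta>*a1)^2 + (z2 + \<beta>*b1)^2 \<le> (\<alpha>*\<beta> + 2*\<beta>*a1)^2 + (\<beta>*\<bar>b1\<bar> + Q)^2"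
    using h2 h4 by (intro add_mono) (simp_all add: abs_le_square_iff power2_le_iff_abs_le)
qed

lemma final_bound:
  fixes \<alpha> \<beta> a1 b1 c1 h \<sigma> \<rho> lH lB :: real
  assumes "\<beta> > 0" "\<alpha> \<ge> 0" "a1 > 0" "c1 > 0" "a1 \<le> h" "\<bar>b1\<bar> \<le> \<sigma>" "c1 \<le> \<rho>"
    "0 < lH" "lH \<le> a1" "0 \<le> lB" "lB \<le> c1"
  shows "((\<alpha> * \<beta> + 2 * \<beta> * a1)^2 + (\<beta> * \<bar>b1\<bar> + sqrt (\<beta>^2 * b1^2 + 4 * \<alpha> * \<beta> * c1))^2)
          / (4 * ((\<alpha> * \<beta> + 2 * \<beta> * a1 + 4 * c1)^2 + 4 * \<beta>^2 * b1^2))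
      \<le> ((\<alpha> * \<beta> + 2 * \<beta> * h)^2 + (\<beta> * \<sigma> + sqrt (\<beta>^2 * \<sigma>^2 + 4 * \<alpha> * \<beta> * \<rho>))^2)
          / (4 * (\<alpha> * \<beta> + 2 * \<beta> * lH + 4 * lB)^2)"
proof (rule frac_le)
  have ab: "\<alpha> * \<beta> \<ge> 0" using assms by simp
  have t1: "(\<alpha> * \<beta> + 2 * \<beta> * a1)^2 \<le> (\<alpha> * \<beta> + 2 * \<beta> * h)^2"
    using assms ab by (intro power_mono) (auto intro: add_left_mono mult_left_mono)
  have bs: "b1^2 \<le> \<sigma>^2" using assms(6) by (simp add: abs_le_square_iff power2_le_iff_abs_le)
  have "\<beta>^2 * b1^2 + 4 * \<alpha> * \<beta> * c1 \<le> \<beta>^2 * \<sigma>^2 + 4 * \<alpha> * \<beta> * \<rho>"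
    using bs assms ab by (intro add_mono mult_left_mono) auto
  hence sq: "sqrt (\<beta>^2 * b1^2 + 4 * \<alpha> * \<beta> * c1) \<le> sqrt (\<beta>^2 * \<sigma>^2 + 4 * \<alpha> * \<beta> * \<rho>)"
    by (rule real_sqrt_le_mono)
  have "\<beta> * \<bar>b1\<bar> \<le> \<beta> * \<sigma>" using assms by simp
  hence t2: "(\<beta> * \<bar>b1\<bar> + sqrt (\<beta>^2 * b1^2 + 4 * \<alpha> * \<beta> * c1))^2 \<le> (\<beta> * \<sigma> + sqrt (\<beta>^2 * \<sigma>^2 + 4 * \<alpha> * \<beta> * \<rho>))^2"
    using sq assms by (intro power_mono add_mono) auto
  show "(\<alpha> * \<beta> + 2 * \<beta> * a1)^2 + (\<beta> * \<bar>b1\<bar> + sqrt (\<beta>^2 * b1^2 + 4 * \<alpha> * \<beta> * c1))^2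
      \<le> (\<alpha> * \<beta> + 2 * \<beta> * h)^2 + (\<beta> * \<sigma> + sqrt (\<beta>^2 * \<sigma>^2 + 4 * \<alpha> * \<beta> * \<rho>))^2"
    using t1 t2 by simp
  show "0 \<le> (\<alpha> * \<beta> + 2 * \<beta> * h)^2 + (\<beta> * \<sigma> + sqrt (\<beta>^2 * \<sigma>^2 + 4 * \<alpha> * \<beta> * \<rho>))^2" by simp
  have p: "0 < \<alpha> * \<beta> + 2 * \<beta> * lH + 4 * lB" using assms ab by (simp add: add_nonneg_pos add_pos_nonneg)
  thus "0 < 4 * (\<alpha> * \<beta> + 2 * \<beta> * lH + 4 * lB)^2" by simp
  have "\<alpha> * \<beta> + 2 * \<beta> * lH + 4 * lB \<le> \<alpha> * \<beta> + 2 * \<beta> * a1 + 4 * c1"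
  proof -
    have "2 * \<beta> * lH \<le> 2 * \<beta> * a1" using assms by simp
    thus ?thesis using assms by linarith
  qed
  hence "(\<alpha> * \<beta> + 2 * \<beta> * lH + 4 * lB)^2 \<le> (\<alpha> * \<beta> + 2 * \<beta> * a1 + 4 * c1)^2"
    using p by (intro power_mono) auto
  thus "4 * (\<alpha> * \<beta> + 2 * \<beta> * lH + 4 * lB)^2 \<le> 4 * ((\<alpha> * \<beta> + 2 * \<beta> * a1 + 4 * c1)^2 + 4 * \<beta>^2 * b1^2)"
  proof -
    have "0 \<le> 4 * \<beta>^2 * b1^2" by simp
    thus ?thesis using \<open>(\<alpha> * \<beta> + 2 * \<beta> * lH + 4 * lB)^2 \<le> _\<close> by (intro mult_left_mono add_increasing2) auto
  qed
qed



lemma topv_nth: "topv z $ p = z $ Inl p" by (simp add: topv_def)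
lemma botv_nth: "botv z $ q = z $ Inr q" by (simp add: botv_def)

lemma stack_nth[simp]: "stack u v $ Inl p = u $ p" "stack u v $ Inr q = v $ q"
  by (simp_all add: stack_def)

lemma cdot_diff: "cdot u (w - w') = cdot u w - cdot u w'"
  by (simp add: cdot_def sum_subtractf algebra_simps)

lemma P_inj:
  fixes A :: "real^'m^'m" and B :: "real^'n^'m"
  assumes pd: "pos_def A" and al: "\<alpha> \<ge> 0" and be: "\<beta> > 0" and z: "P_MGSSP \<alpha> \<beta> A B *v z = 0"
  shows "z = 0"
proof -
  define z1 where "z1 = topv z"
  define z2 where "z2 = botv z"
  have e2: "z2 = (2/\<beta>) *s (transpose B *v z1)"
  proof -
    have "\<forall>q. - 2 * (transpose B *v z1) $ q + \<beta> * z2 $ q = 0"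
      using z P_bot[of \<alpha> \<beta> A B z] by (simp add: z1_def z2_def botv_def)
    thus ?thesis using be by (simp add: vec_eq_iff field_simps)
  qed
  have e1: "\<alpha> *s z1 + 2 *s (A *v z1) + 2 *s (B *v z2) = 0"
    using z P_top[of \<alpha> \<beta> A B z] by (simp add: vec_eq_iff z1_def z2_def topv_nth)
  hence "z1 \<bullet> (\<alpha> *s z1 + 2 *s (A *v z1) + 2 *s (B *v z2)) = 0" by simp
  hence h: "\<alpha> * (z1 \<bullet> z1) + 2 * (z1 \<bullet> (A *v z1)) + 2 * (z1 \<bullet> (B *v z2)) = 0"
    by (simp add: inner_add_right scalar_mult_eq_scaleR)
  have "z1 \<bullet> (B *v z2) = (2/\<beta>) * ((transpose B *v z1) \<bullet> (transpose B *v z1))"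
    using inner_mat_sym[of z1 B z2] e2 by (simp add: scalar_mult_eq_scaleR)
  moreover have "0 \<le> (2/\<beta>) * ((transpose B *v z1) \<bullet> (transpose B *v z1))" using be by simp
  moreover have "0 \<le> \<alpha> * (z1 \<bullet> z1)" using al by simp
  ultimately have "z1 \<bullet> (A *v z1) \<le> 0" using h by linarith
  hence z10: "z1 = 0" using pd unfolding pos_def_def by (meson not_le)
  hence "z2 = 0" using e2 by simp
  thus "z = 0" using z10 topv_botv_zero unfolding z1_def z2_def by blast
qed

lemma H_quad:
  fixes A :: "real^'m^'m"
  assumes "H = (1/2) *\<^sub>R (A + transpose A)"
  shows "z \<bullet> (H *v z) = z \<bullet> (A *v z)"
proof -
  have "H *v z = (1/2) *\<^sub>R (A *v z + transpose A *v z)"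
    unfolding assms scaleR_matrix_vector_assoc[symmetric] by (simp add: matrix_vector_mult_add_rdistrib)
  moreover have "z \<bullet> (transpose A *v z) = z \<bullet> (A *v z)"
    using inner_mat_sym[of z "transpose A" z] by (simp add: inner_commute)
  ultimately show ?thesis by (simp add: inner_add_right)
qed

lemma S_quad:
  fixes A :: "real^'m^'m"
  assumes "S = (1/2) *\<^sub>R (A - transpose A)"
  shows "2 * (x \<bullet> (S *v y)) = x \<bullet> (A *v y) - y \<bullet> (A *v x)"
proof -
  have "S *v y = (1/2) *\<^sub>R (A *v y - transpose A *v y)"
    unfolding assms scaleR_matrix_vector_assoc[symmetric] by (simp add: matrix_vector_mult_diff_rdistrib)
  moreover have "x \<bullet> (transpose A *v y) = y \<bullet> (A *v x)"
    using inner_mat_sym[of x "transpose A" y] by (simp add: inner_commute)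
  ultimately show ?thesis by (simp add: inner_diff_right)
qed

lemma H_sym: "H = (1/2) *\<^sub>R (A + transpose A) \<Longrightarrow> transpose H = (H::real^'m^'m)"
  by (hypsubst, simp add: vec_eq_iff transpose_def add.commute)

lemma S_skew: "S = (1/2) *\<^sub>R (A - transpose A) \<Longrightarrow> transpose S = - (S::real^'m^'m)"
  by (hypsubst, simp add: vec_eq_iff transpose_def algebra_simps)

lemma BB_sym: "transpose (B ** transpose B) = (B ** transpose B :: real^'m^'m)"
  by (simp add: matrix_transpose_mul)

lemma BB_quad: fixes B :: "real^'n^'m" shows "z \<bullet> ((B ** transpose B) *v z) = (transpose B *v z) \<bullet> (transpose B *v z)"
  using inner_mat_sym[of z B "transpose B *v z"] by (simp add: matrix_vector_mul_assoc[symmetric])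


theorem theorem5p1:
  fixes A :: "real^'m^'m" and B :: "real^'n^'m" and \<alpha> \<beta> :: real
    and lam :: complex and u :: "complex^'m" and v :: "complex^'n" and s :: real
    and H S :: "real^'m^'m" and a1 b1 c1 a2 b2 z1 z2 bound1 bound2 :: real
    and D lam_p lam_m :: complex
  assumes "CARD('n) \<le> CARD('m)"
    and "pos_def A" and "\<alpha> \<ge> 0" and "\<beta> > 0"
    and "stack u v \<noteq> 0"
    and "cmat (matrix_inv (P_MGSSP \<alpha> \<beta> A B) ** saddle_mat A B) *v stack u v = lam *s stack u v"
    and "cmat (transpose B) *v u \<noteq> 0"
  assumes "H = (1/2) *\<^sub>R (A + transpose A)"
    and "S = (1/2) *\<^sub>R (A - transpose A)"
    and "a1 = Re (cdot u (cmat A *v u) / cdot u u)"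
    and "b1 = Im (cdot u (cmat A *v u) / cdot u u)"
    and "c1 = Re (cdot u (cmat (B ** transpose B) *v u) / cdot u u)"
    and "a2 = \<beta>^2 * (a1^2 - b1^2) - 4 * \<alpha> * \<beta> * c1"
    and "b2 = 2 * \<beta>^2 * a1 * b1"
    and "z1 = sqrt ((sqrt (a2^2 + b2^2) + a2) / 2)"
    and "s = 1 \<or> s = -1" and "b1 \<noteq> 0 \<Longrightarrow> s = sgn b1"
    and "z2 = s * sqrt ((sqrt (a2^2 + b2^2) - a2) / 2)"
    and "D = Complex (\<alpha> * \<beta> + 2 * \<beta> * a1 + 4 * c1) (2 * \<beta> * b1)"
    and "lam_p = 1/2 + Complex (z1 - \<alpha> * \<beta> - \<beta> * a1) (z2 - \<beta> * b1) / (2 * D)"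
    and "lam_m = 1/2 - Complex (z1 + \<alpha> * \<beta> + \<beta> * a1) (z2 + \<beta> * b1) / (2 * D)"
    and "bound1 = ((\<alpha> * \<beta> + 2 * \<beta> * a1)^2
                    + (\<beta> * \<bar>b1\<bar> + sqrt (\<beta>^2 * b1^2 + 4 * \<alpha> * \<beta> * c1))^2)
                  / (4 * ((\<alpha> * \<beta> + 2 * \<beta> * a1 + 4 * c1)^2 + 4 * \<beta>^2 * b1^2))"
    and "bound2 = ((\<alpha> * \<beta> + 2 * \<beta> * spec_radius H)^2
                    + (\<beta> * spec_radius S + sqrt (\<beta>^2 * (spec_radius S)^2
                         + 4 * \<alpha> * \<beta> * spec_radius (B ** transpose B)))^2)
                  / (4 * (\<alpha> * \<beta> + 2 * \<beta> * lambda_min H + 4 * lambda_min (B ** transpose B))^2)"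
  shows "(lam = lam_p \<or> lam = lam_m)
         \<and> (\<forall>\<mu>\<in>{lam_p, lam_m}. (cmod (\<mu> - 1/2))^2 \<le> bound1 \<and> bound1 \<le> bound2)"
proof -
  have pd: "pos_def A" using assms(2) .
  have al: "\<alpha> \<ge> 0" using assms(3) .
  have be: "\<beta> > 0" using assms(4) .
  have eig: "cmat (matrix_inv (P_MGSSP \<alpha> \<beta> A B) ** saddle_mat A B) *v stack u v = lam *s stack u v" using assms(6) .
  have gnz: "cmat (transpose B) *v u \<noteq> 0" using assms(7) .
  have Hd: "H = (1/2) *\<^sub>R (A + transpose A)" using assms(8) .
  have Sd: "S = (1/2) *\<^sub>R (A - transpose A)" using assms(9) .
  have a1d: "a1 = Re (cdot u (cmat A *v u) / cdot u u)" using assms(10) .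
  have b1d: "b1 = Im (cdot u (cmat A *v u) / cdot u u)" using assms(11) .
  have c1d: "c1 = Re (cdot u (cmat (B ** transpose B) *v u) / cdot u u)" using assms(12) .
  have a2d: "a2 = \<beta>^2 * (a1^2 - b1^2) - 4 * \<alpha> * \<beta> * c1" using assms(13) .
  have b2d: "b2 = 2 * \<beta>^2 * a1 * b1" using assms(14) .
  have z1d: "z1 = sqrt ((sqrt (a2^2 + b2^2) + a2) / 2)" using assms(15) .
  have sd: "s = 1 \<or> s = -1" using assms(16) .
  have ssg: "b1 \<noteq> 0 \<Longrightarrow> s = sgn b1" using assms(17) .
  have z2d: "z2 = s * sqrt ((sqrt (a2^2 + b2^2) - a2) / 2)" using assms(18) .
  have Dd: "D = Complex (\<alpha> * \<beta> + 2 * \<beta> * a1 + 4 * c1) (2 * \<beta> * b1)" using assms(19) .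
  have lpd: "lam_p = 1/2 + Complex (z1 - \<alpha> * \<beta> - \<beta> * a1) (z2 - \<beta> * b1) / (2 * D)" using assms(20) .
  have lmd: "lam_m = 1/2 - Complex (z1 + \<alpha> * \<beta> + \<beta> * a1) (z2 + \<beta> * b1) / (2 * D)" using assms(21) .
  have bd1: "bound1 = ((\<alpha> * \<beta> + 2 * \<beta> * a1)^2
                    + (\<beta> * \<bar>b1\<bar> + sqrt (\<beta>^2 * b1^2 + 4 * \<alpha> * \<beta> * c1))^2)
                  / (4 * ((\<alpha> * \<beta> + 2 * \<beta> * a1 + 4 * c1)^2 + 4 * \<beta>^2 * b1^2))" using assms(22) .
  have bd2: "bound2 = ((\<alpha> * \<beta> + 2 * \<beta> * spec_radius H)^2
                    + (\<beta> * spec_radius S + sqrt (\<beta>^2 * (spec_radius S)^2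
                         + 4 * \<alpha> * \<beta> * spec_radius (B ** transpose B)))^2)
                  / (4 * (\<alpha> * \<beta> + 2 * \<beta> * lambda_min H + 4 * lambda_min (B ** transpose B))^2)" using assms(23) .
  let ?P = "P_MGSSP \<alpha> \<beta> A B"
  let ?K = "saddle_mat A B"
  define g where "g = cmat (transpose B) *v u"
  define x where "x = re_v u"
  define y where "y = im_v u"
  define nr where "nr = x \<bullet> x + y \<bullet> y"
  define BB where "BB = B ** transpose B"
  
  have "\<exists>B'. B' ** ?P = mat 1" unfolding matrix_left_invertible_ker using P_inj[OF pd al be] by blast
  hence "invertible ?P" using invertible_left_inverse by blast
  hence "\<exists>P'. ?P ** P' = mat 1 \<and> P' ** ?P = mat 1" unfolding invertible_def .
  hence PPi: "?P ** matrix_inv ?P = mat 1" unfolding matrix_inv_def by (rule someI_ex[THEN conjunct1])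
  have eq: "cmat ?K *v stack u v = lam *s (cmat ?P *v stack u v)"
  proof -
    have "cmat ?K *v stack u v = cmat (?P ** (matrix_inv ?P ** ?K)) *v stack u v"
      by (simp add: matrix_mul_assoc PPi)
    also have "\<dots> = cmat ?P *v (cmat (matrix_inv ?P ** ?K) *v stack u v)"
      by (simp add: cmat_mult matrix_vector_mul_assoc)
    also have "\<dots> = lam *s (cmat ?P *v stack u v)" using eig by (simp add: vec.scale)
    finally show ?thesis .
  qed
  have E1: "cmat A *v u + cmat B *v v = lam *s (complex_of_real \<alpha> *s u + 2 *s (cmat A *v u) + 2 *s (cmat B *v v))"
  proof (subst vec_eq_iff, intro allI)
    fix p
    have "(cmat ?K *v stack u v) $ Inl p = (lam *s (cmat ?P *v stack u v)) $ Inl p" using eq by simp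
    thus "(cmat A *v u + cmat B *v v) $ p = (lam *s (complex_of_real \<alpha> *s u + 2 *s (cmat A *v u) + 2 *s (cmat B *v v))) $ p"
      by (simp add: cK_top cP_top algebra_simps)
  qed
  have E2: "- g = lam *s ((-2) *s g + complex_of_real \<beta> *s v)"
  proof (subst vec_eq_iff, intro allI)
    fix q
    have "(cmat ?K *v stack u v) $ Inr q = (lam *s (cmat ?P *v stack u v)) $ Inr q" using eq by simp
    thus "(- g) $ q = (lam *s ((-2) *s g + complex_of_real \<beta> *s v)) $ q"
      by (simp add: cK_bot cP_bot g_def algebra_simps)
  qed
  have s1: "cdot u (cmat A *v u) + cdot g v = lam * (complex_of_real \<alpha> * cdot u u + 2 * cdot u (cmat A *v u) + 2 * cdot g v)"
    using arg_cong[OF E1, of "cdot u"] by (simp add: cdot_add cdot_scale cdot_adj[of u B v] g_def algebra_simps)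
  have s2: "- cdot g g = lam * ((-2) * cdot g g + complex_of_real \<beta> * cdot g v)"
    using arg_cong[OF E2, of "cdot g"] by (simp add: cdot_add cdot_scale cdot_neg cdot_diff algebra_simps)
  
  have unz: "u \<noteq> 0" using gnz by auto
  have nrpos: "nr > 0" unfolding nr_def x_def y_def by (rule cdot_self_pos[OF unz])
  have N: "cdot u u = complex_of_real nr" unfolding nr_def x_def y_def by (rule cdot_self)
  have W: "cdot u (cmat A *v u) = Complex (x \<bullet> (A *v x) + y \<bullet> (A *v y)) (x \<bullet> (A *v y) - y \<bullet> (A *v x))"
    unfolding x_def y_def by (rule cdot_quad)
  have a1v: "a1 * nr = x \<bullet> (A *v x) + y \<bullet> (A *v y)" using a1d nrpos by (simp add: W N)
  have b1v: "b1 * nr = x \<bullet> (A *v y) - y \<bullet> (A *v x)" using b1d nrpos by (simp add: W N)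
  have BBq: "cdot u (cmat BB *v u) = cdot g g"
    unfolding BB_def g_def by (simp add: cmat_mult matrix_vector_mul_assoc[symmetric] cdot_adj[of u B])
  have WB: "cdot u (cmat BB *v u) = Complex (x \<bullet> (BB *v x) + y \<bullet> (BB *v y)) (x \<bullet> (BB *v y) - y \<bullet> (BB *v x))"
    unfolding x_def y_def by (rule cdot_quad)
  have c1v: "c1 * nr = x \<bullet> (BB *v x) + y \<bullet> (BB *v y)" using c1d nrpos unfolding BB_def[symmetric] by (simp add: WB N)
  define gr where "gr = re_v g \<bullet> re_v g + im_v g \<bullet> im_v g"
  have grpos: "gr > 0" unfolding gr_def g_def by (rule cdot_self_pos[OF gnz])
  have G: "cdot g g = complex_of_real gr" unfolding gr_def by (rule cdot_self)
  have imBB: "x \<bullet> (BB *v y) - y \<bullet> (BB *v x) = 0"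
    using inner_mat_sym[of x BB y] BB_sym[of B] unfolding BB_def by (simp add: inner_commute)
  have Gc: "cdot g g = complex_of_real c1 * cdot u u"
    using BBq WB imBB c1v N by (simp add: complex_eq_iff)
  have c1pos: "c1 > 0"
  proof -
    have "c1 * nr = gr" using Gc G N by (simp add: complex_eq_iff)
    thus ?thesis using grpos nrpos by (metis zero_less_mult_pos2)
  qed
  have a1pos: "a1 > 0"
  proof -
    have qa: "z \<bullet> (A *v z) \<ge> 0" for z using pd unfolding pos_def_def by (cases "z = 0") (auto intro: less_imp_le)
    have "x \<noteq> 0 \<or> y \<noteq> 0" using nrpos unfolding nr_def by auto
    hence "x \<bullet> (A *v x) + y \<bullet> (A *v y) > 0" using pd qa[of x] qa[of y] unfolding pos_def_def
      by (metis add_pos_nonneg add_nonneg_pos)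
    thus ?thesis using a1v nrpos by (metis zero_less_mult_pos2)
  qed
  
  define wc where "wc = Complex a1 b1"
  define cc where "cc = complex_of_real c1"
  define N where "N = cdot u u"
  define X where "X = cdot g v"
  define alc where "alc = complex_of_real \<alpha>"
  define bec where "bec = complex_of_real \<beta>"
  have Nnz: "N \<noteq> 0" using N nrpos unfolding N_def by simp
  have Wwc: "cdot u (cmat A *v u) = wc * N"
    unfolding wc_def N_def N using a1v b1v by (simp add: W complex_eq_iff mult.commute)
  have Gcc: "cdot g g = cc * N" unfolding cc_def N_def using Gc .
  have s1': "wc * N + X = lam * (alc * N + 2 * (wc * N) + 2 * X)"
    using s1 unfolding Wwc X_def alc_def N_def .
  have s2': "- (cc * N) = lam * ((-2) * (cc * N) + bec * X)"
    using s2 unfolding Gcc X_def bec_def .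
  have "N * ((1 - 2*lam) * lam * bec * wc - lam^2 * alc * bec - (1 - 2*lam)^2 * cc) = 0"
    using s1' s2' by algebra
  hence poly: "(1 - 2*lam) * lam * bec * wc - lam^2 * alc * bec - (1 - 2*lam)^2 * cc = 0"
    using Nnz by simp
  define F where "F = alc * bec + bec * wc"
  define Zc where "Zc = Complex z1 z2"
  have Dc: "D = alc * bec + 2 * bec * wc + 4 * cc"
    unfolding Dd alc_def bec_def wc_def cc_def by (simp add: complex_eq_iff)
  have Dnz: "D \<noteq> 0"
  proof -
    have "Re D > 0" using Dd al be a1pos c1pos by (simp add: add_nonneg_pos add_pos_nonneg)
    thus ?thesis by auto
  qed
  have zz: "z1^2 - z2^2 = a2 \<and> 2 * z1 * z2 = b2"
  proof (rule zsq[OF refl z1d z2d sd])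
    show "s * \<bar>b2\<bar> = b2"
    proof (cases "b1 = 0")
      case True thus ?thesis using b2d by simp
    next
      case False
      hence "s = sgn b1" using ssg by simp
      thus ?thesis using b2d a1pos be False
        by (auto simp: abs_mult sgn_if abs_if mult_less_0_iff)
    qed
  qed
  have Z2: "Zc^2 = bec^2 * wc^2 - 4 * alc * bec * cc"
    using zz unfolding Zc_def bec_def wc_def alc_def cc_def a2d b2d
    by (simp add: complex_eq_iff power2_eq_square algebra_simps)
  have "(D * (2*lam - 1) + F)^2 = Zc^2"
    using poly unfolding Z2 Dc F_def by algebra
  hence "(D * (2*lam - 1) + F - Zc) * (D * (2*lam - 1) + F + Zc) = 0"
    by (simp add: power2_eq_square algebra_simps)
  hence "D * (2*lam - 1) + F - Zc = 0 \<or> D * (2*lam - 1) + F + Zc = 0" by simp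
  moreover have "D * (2*lam - 1) + F - Zc = 0 \<Longrightarrow> D * (2*lam - 1) = Zc - F" by algebra
  moreover have "D * (2*lam - 1) + F + Zc = 0 \<Longrightarrow> D * (2*lam - 1) = - (Zc + F)" by algebra
  ultimately have cases: "D * (2*lam - 1) = Zc - F \<or> D * (2*lam - 1) = - (Zc + F)" by blast
  have qp: "Complex (z1 - \<alpha> * \<beta> - \<beta> * a1) (z2 - \<beta> * b1) = Zc - F"
    unfolding Zc_def F_def alc_def bec_def wc_def by (simp add: complex_eq_iff)
  have qm: "Complex (z1 + \<alpha> * \<beta> + \<beta> * a1) (z2 + \<beta> * b1) = Zc + F"
    unfolding Zc_def F_def alc_def bec_def wc_def by (simp add: complex_eq_iff)
  have part1: "lam = lam_p \<or> lam = lam_m"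
  proof -
    have "lam = 1/2 + (Zc - F) / (2 * D) \<or> lam = 1/2 - (Zc + F) / (2 * D)"
      using cases Dnz by (auto simp: field_simps)
    thus ?thesis unfolding lpd lmd qp qm .
  qed
  
  define Q where "Q = sqrt (\<beta>^2 * b1^2 + 4 * \<alpha> * \<beta> * c1)"
  have zb: "0 \<le> z1 \<and> z1 \<le> \<beta> * a1 \<and> \<bar>z2\<bar> \<le> Q"
    unfolding Q_def using zbounds[OF be al a1pos less_imp_le[OF c1pos] a2d b2d refl z1d z2d sd] .
  have nb1: "(z1 - \<alpha>*\<beta> - \<beta>*a1)^2 + (z2 - \<beta>*b1)^2 \<le> (\<alpha>*\<beta> + 2*\<beta>*a1)^2 + (\<beta>*\<bar>b1\<bar> + Q)^2"
   and nb2: "(z1 + \<alpha>*\<beta> + \<beta>*a1)^2 + (z2 + \<beta>*b1)^2 \<le> (\<alpha>*\<beta> + 2*\<beta>*a1)^2 + (\<beta>*\<bar>b1\<bar> + Q)^2"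
    using num_bound[OF be al a1pos] zb by auto
  define den where "den = 4 * ((\<alpha> * \<beta> + 2 * \<beta> * a1 + 4 * c1)^2 + 4 * \<beta>^2 * b1^2)"
  have cD: "(cmod (2 * D))^2 = den"
  proof -
    have "(cmod (2 * D))^2 = 4 * ((Re D)^2 + (Im D)^2)" by (simp add: norm_mult power_mult_distrib cmod_power2)
    also have "(Im D)^2 = 4 * \<beta>^2 * b1^2" unfolding Dd by (simp add: power_mult_distrib)
    finally show ?thesis unfolding den_def Dd by simp
  qed
  have denpos: "den > 0" using Dnz cD by (metis zero_less_power2 norm_eq_zero mult_eq_0_iff zero_neq_numeral)
  have cm: "(cmod (q / (2 * D)))^2 = ((Re q)^2 + (Im q)^2) / den" for q
  proof -
    have "(cmod (q / (2 * D)))^2 = (cmod q)^2 / (cmod (2 * D))^2" by (simp only: norm_divide power_divide)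
    thus ?thesis by (simp only: cD cmod_power2[of q])
  qed
  have b1form: "bound1 = ((\<alpha>*\<beta> + 2*\<beta>*a1)^2 + (\<beta>*\<bar>b1\<bar> + Q)^2) / den"
    unfolding bd1 Q_def den_def by simp
  have bp: "(cmod (lam_p - 1/2))^2 \<le> bound1"
  proof -
    have "(cmod (lam_p - 1/2))^2 = ((z1 - \<alpha>*\<beta> - \<beta>*a1)^2 + (z2 - \<beta>*b1)^2) / den"
      unfolding lpd by (simp add: cm)
    thus ?thesis unfolding b1form using nb1 denpos by (simp add: divide_right_mono)
  qed
  have bm: "(cmod (lam_m - 1/2))^2 \<le> bound1"
  proof -
    have "(cmod (lam_m - 1/2))^2 = (cmod (Complex (z1 + \<alpha> * \<beta> + \<beta> * a1) (z2 + \<beta> * b1) / (2 * D)))^2"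
      unfolding lmd by (simp add: norm_minus_commute)
    also have "\<dots> = ((z1 + \<alpha>*\<beta> + \<beta>*a1)^2 + (z2 + \<beta>*b1)^2) / den" by (simp add: cm)
    finally show ?thesis unfolding b1form using nb2 denpos by (simp add: divide_right_mono)
  qed
  
  have Hsym: "transpose H = H" by (rule H_sym[OF Hd])
  have Hq: "z \<bullet> (H *v z) = z \<bullet> (A *v z)" for z by (rule H_quad[OF Hd])
  have Hpos: "\<forall>z. z \<noteq> 0 \<longrightarrow> z \<bullet> (H *v z) > 0" using pd unfolding pos_def_def Hq by blast
  hence Hpos': "\<forall>z. z \<noteq> 0 \<longrightarrow> z \<bullet> (H *v z) \<ge> 0" by (auto intro: less_imp_le)
  note LH = lambda_min_le[OF Hsym Hpos']
  have lH0: "lambda_min H > 0" using LH(2) Hpos .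
  have "lambda_min H * nr \<le> x \<bullet> (H *v x) + y \<bullet> (H *v y)" using LH(1) unfolding nr_def by blast
  hence "lambda_min H * nr \<le> a1 * nr" by (simp add: Hq a1v)
  hence lHa: "lambda_min H \<le> a1" using nrpos by simp
  have BBs: "transpose BB = BB" unfolding BB_def by (rule BB_sym)
  have BBpos: "\<forall>z. z \<noteq> 0 \<longrightarrow> z \<bullet> (BB *v z) \<ge> 0" unfolding BB_def BB_quad by simp
  note LB = lambda_min_le[OF BBs BBpos]
  have lB0: "lambda_min BB \<ge> 0" using LB(1) by blast
  have "lambda_min BB * nr \<le> x \<bullet> (BB *v x) + y \<bullet> (BB *v y)" using LB(1) unfolding nr_def by blast
  hence "lambda_min BB * nr \<le> c1 * nr" by (simp add: c1v)
  hence lBc: "lambda_min BB \<le> c1" using nrpos by simp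
  have "x \<bullet> (H *v x) + y \<bullet> (H *v y) \<le> spec_radius H * nr" using spec_radius_sym[OF Hsym] unfolding nr_def by blast
  hence "a1 * nr \<le> spec_radius H * nr" by (simp add: Hq a1v)
  hence hH: "a1 \<le> spec_radius H" using nrpos by simp
  have "x \<bullet> (BB *v x) + y \<bullet> (BB *v y) \<le> spec_radius BB * nr" using spec_radius_sym[OF BBs] unfolding nr_def by blast
  hence "c1 * nr \<le> spec_radius BB * nr" by (simp add: c1v)
  hence hB: "c1 \<le> spec_radius BB" using nrpos by simp
  have "\<bar>b1\<bar> * nr \<le> spec_radius S * nr"
  proof -
    have "\<bar>b1\<bar> * nr = \<bar>b1 * nr\<bar>" using nrpos by (simp add: abs_mult)
    also have "\<dots> = 2 * \<bar>x \<bullet> (S *v y)\<bar>" unfolding b1v S_quad[OF Sd, symmetric] by simp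
    also have "\<dots> \<le> spec_radius S * nr" unfolding nr_def by (rule spec_radius_skew[OF S_skew[OF Sd]])
    finally show ?thesis .
  qed
  hence hS: "\<bar>b1\<bar> \<le> spec_radius S" using nrpos by simp
  have b12: "bound1 \<le> bound2"
    unfolding bd1 bd2 BB_def[symmetric]
    by (rule final_bound[OF be al a1pos c1pos hH hS hB lH0 lHa lB0 lBc])
  show ?thesis using part1 bp bm b12 by auto
qed

end
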